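(* Let $n\in\mathbb{N}$ and $r>1$. Let $S'\subset\mathbb{R}^n$ be an $n$-simplex with $B(u,1/r)\subset S'\subset B(u,r)$ for some $u\in\mathbb{R}^n$. Let $F$ be a facet of $S'$ with supporting hyperplane $H$, and let $H^+,H^-$ be the two closed half-spaces determined by $H$, with $S'\subset H^+$ and $H^-$ disjoint from the interior of $S'$. Then there exists $v\in F$ such that $$B(v,1/r)\cap H^+\subset S'\qquad\text{and}\qquad B(v,1/r)\cap H\subset F\subset B(v,2r)\cap H.$$
   Context: $B(p,r)$ denotes the open Euclidean ball of radius $r$ centered at $p$. *)

theory Defs
  imports "HOL-Analysis.Analysis"
begin

end

theory Submission
  imports Defs
begin

theorem mainTheorem11:
  fixes S' F :: "'a::euclidean_space set" and u a :: 'a and r b :: real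
  assumes r: "r > 1"
    and simp: "int DIM('a) simplex S'"
    and balls: "ball u (1/r) \<subseteq> S'" "S' \<subseteq> ball u r"
    and facet: "F facet_of S'"
    and hyp: "a \<noteq> 0" "affine hull F = {x. a \<bullet> x = b}"
    and Hplus: "S' \<subseteq> {x. a \<bullet> x \<le> b}"
    and Hminus: "{x. a \<bullet> x \<ge> b} \<inter> interior S' = {}"
  shows "\<exists>v\<in>F. ball v (1/r) \<inter> {x. a \<bullet> x \<le> b} \<subseteq> S'
            \<and> ball v (1/r) \<inter> {x. a \<bullet> x = b} \<subseteq> F
            \<and> F \<subseteq> ball v (2*r) \<inter> {x. a \<bullet> x = b}"
proof -
  obtain C where C: "\<not> affine_dependent C" "S' = convex hull C"
    using simp unfolding simplex_def by blast
  obtain p where p: "p \<in> C" "F = convex hull (C - {p})" "F \<noteq> {}"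
    using facet C facet_of_convex_hull_affine_independent by blast
  define D where "D = C - {p}"
  have Dne: "D \<noteq> {}" using p D_def by auto
  have "insert p D = C" using p(1) D_def by blast
  hence S'eq: "S' = convex hull (insert p D)" using C(2) by simp
  have "F \<subseteq> affine hull F" by (rule hull_subset)
  hence FH: "F \<subseteq> {x. a \<bullet> x = b}" using hyp(2) by simp
  have "insert p D \<subseteq> convex hull (insert p D)" by (rule hull_subset)
  hence pS: "p \<in> S'" using S'eq by blast
  have "p \<notin> affine hull D" using C(1) p(1) unfolding affine_dependent_def D_def by blast
  hence "a \<bullet> p \<noteq> b" using hyp(2) p(2) D_def by simp
  hence apb: "a \<bullet> p < b" using Hplus pS by fastforce
  have rep: "\<exists>t q. 0 \<le> t \<and> t \<le> 1 \<and> q \<in> F \<and> x = (1-t) *\<^sub>R p + t *\<^sub>R q" if "x \<in> S'" for x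
  proof -
    have "x \<in> convex hull (insert p D)" using that S'eq by simp
    then obtain c d q where cd: "c \<ge> 0" "d \<ge> 0" "c + d = 1" "q \<in> convex hull D" "x = c *\<^sub>R p + d *\<^sub>R q"
      unfolding convex_hull_insert[OF Dne] by blast
    have "convex hull D = F" using p(2) D_def by simp
    hence qF: "q \<in> F" using cd(4) by simp
    have "c = 1 - d" using cd(3) by simp
    hence "x = (1-d) *\<^sub>R p + d *\<^sub>R q" using cd(5) by simp
    moreover have "d \<le> 1" using cd by simp
    ultimately show ?thesis using qF cd(2) by blast
  qed
  have aval: "a \<bullet> x \<ge> a \<bullet> p" if xS: "x \<in> S'" for x
  proof -
    obtain t q where tq: "0 \<le> t" "t \<le> 1" "q \<in> F" "x = (1-t) *\<^sub>R p + t *\<^sub>R q" using rep[OF xS] by metis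
    have "a \<bullet> q = b" using subsetD[OF FH tq(3)] by simp
    moreover have "a \<bullet> x = (1-t) * (a \<bullet> p) + t * (a \<bullet> q)" using tq(4) by (simp add: inner_add_right)
    ultimately have "a \<bullet> x = a \<bullet> p + t * (b - a \<bullet> p)" by (simp add: algebra_simps)
    moreover have "t * (b - a \<bullet> p) \<ge> 0" using tq(1) apb by simp
    ultimately show ?thesis by linarith
  qed
  have r0: "1/r > 0" using r by simp
  have "u \<in> ball u (1/r)" using r0 by simp
  hence ui: "u \<in> interior S'" using interior_maximal[OF balls(1) open_ball] by (rule subsetD[rotated])
  have aub: "a \<bullet> u < b"
  proof (rule ccontr)
    assume "\<not> a \<bullet> u < b"
    hence "u \<in> {x. a \<bullet> x \<ge> b} \<inter> interior S'" using ui by simp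
    thus False using Hminus by simp
  qed
  define \<delta> where "\<delta> = 1 / (2 * r * norm a)"
  have na: "norm a > 0" using hyp(1) by simp
  have dpos: "\<delta> > 0" using r na by (simp add: \<delta>_def)
  have "dist u (u - \<delta> *\<^sub>R a) = \<delta> * norm a" using dpos by (simp add: dist_norm)
  also have "\<dots> = 1/(2*r)" using na by (simp add: \<delta>_def)
  also have "\<dots> < 1/r" using r by (simp add: field_simps)
  finally have "u - \<delta> *\<^sub>R a \<in> S'" using balls(1) by auto
  hence "a \<bullet> (u - \<delta> *\<^sub>R a) \<ge> a \<bullet> p" by (rule aval)
  moreover have "a \<bullet> (u - \<delta> *\<^sub>R a) = a \<bullet> u - \<delta> * (norm a)^2"
    by (simp add: inner_diff_right power2_norm_eq_inner)
  moreover have "\<delta> * (norm a)^2 > 0" using dpos na by simp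
  ultimately have aup: "a \<bullet> u > a \<bullet> p" by linarith
  define lam where "lam = (b - a \<bullet> p) / (a \<bullet> u - a \<bullet> p)"
  have lam1: "lam \<ge> 1" using aup aub by (simp add: lam_def field_simps)
  define v where "v = p + lam *\<^sub>R (u - p)"
  have l: "lam * (a \<bullet> u - a \<bullet> p) = b - a \<bullet> p" using aup by (simp add: lam_def)
  have "a \<bullet> v = a \<bullet> p + lam * (a \<bullet> u - a \<bullet> p)"
    by (simp add: v_def inner_add_right inner_diff_right)
  hence av: "a \<bullet> v = b" using l by simp
  have main: "y \<in> S' \<and> (a \<bullet> y = b \<longrightarrow> y \<in> F)" if y: "dist v y < 1/r" "a \<bullet> y \<le> b" for y
  proof -
    define x where "x = u + (1/lam) *\<^sub>R (y - v)"
    have "dist u x = norm (y - v) / lam" using lam1 by (simp add: x_def dist_norm)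
    also have "\<dots> \<le> norm (y - v)" using lam1 by (simp add: divide_le_eq mult_le_cancel_left1)
    also have "\<dots> < 1/r" using y(1) by (simp add: dist_norm norm_minus_commute)
    finally have "x \<in> S'" using balls(1) by auto
    then obtain c q where cq: "0 \<le> c" "c \<le> 1" "q \<in> F" "x = (1-c) *\<^sub>R p + c *\<^sub>R q" using rep by blast
    define t where "t = lam * c"
    have yeq: "y = p + lam *\<^sub>R (x - p)" using lam1 by (simp add: x_def v_def algebra_simps)
    also have "\<dots> = (1 - t) *\<^sub>R p + t *\<^sub>R q" by (simp add: cq(4) t_def algebra_simps)
    finally have yeq2: "y = (1 - t) *\<^sub>R p + t *\<^sub>R q" .
    have ay: "a \<bullet> y = (1-t) * (a \<bullet> p) + t * b" using yeq2 cq FH by (auto simp: inner_add_right)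
    have t0: "t \<ge> 0" using lam1 cq by (simp add: t_def)
    have "(1 - t) * (a \<bullet> p - b) \<le> 0" using ay y(2) by (simp add: algebra_simps)
    hence t1: "t \<le> 1" using apb by (smt (verit) mult_neg_neg)
    have "y \<in> S'" unfolding S'eq convex_hull_insert[OF Dne]
      using t0 t1 cq(3) p(2) D_def yeq2 by (intro CollectI exI[of _ "1-t"] exI[of _ t] exI[of _ q]) auto
    moreover have "a \<bullet> y = b \<longrightarrow> y \<in> F"
    proof
      assume "a \<bullet> y = b"
      hence "(1 - t) * (a \<bullet> p - b) = 0" using ay by (simp add: algebra_simps)
      hence "t = 1" using apb by simp
      thus "y \<in> F" using yeq2 cq(3) by simp
    qed
    ultimately show ?thesis by blast
  qed
  have vF: "v \<in> F" using main[of v] r0 av by simp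
  show ?thesis
  proof (intro bexI[OF _ vF] conjI)
    show "ball v (1/r) \<inter> {x. a \<bullet> x \<le> b} \<subseteq> S'" using main by auto
    show "ball v (1/r) \<inter> {x. a \<bullet> x = b} \<subseteq> F" using main by auto
    show "F \<subseteq> ball v (2*r) \<inter> {x. a \<bullet> x = b}"
    proof
      fix x assume xF: "x \<in> F"
      have "F \<subseteq> S'" using facet facet_of_imp_subset by blast
      hence "dist u x < r" "dist u v < r" using xF vF balls(2) by auto
      hence "dist v x < 2*r" by (smt (verit) dist_commute dist_triangle)
      thus "x \<in> ball v (2*r) \<inter> {x. a \<bullet> x = b}" using xF FH by auto
    qed
  qed
qed

end
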